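(* Consider the rooted labelled tree (Catalan generating tree) in which the root has label $s\ge 2$ and every node with label $j$ has exactly $j$ children, with labels $2,3,\dots,j+1$. For $m\ge 1$ let $X^{(s)}_m$ be the label of a node chosen uniformly at random among the nodes at depth $m$ (the root having depth $0$). Then $$\mathbf{E}\big[X^{(s)}_m\big]<4+\frac{2s}{m}.$$
   Context: The labels record the number of valid insertion positions: in the tree of $321$-avoiding permutations built by inserting the new maximal entry, a permutation with $j$ valid insertion positions has $j$ children, whose numbers of valid insertion positions are $2,3,\dots,j+1$. *)

theory Defs
  imports Complex_Main
begin

fun level_labels :: "nat \<Rightarrow> nat \<Rightarrow> nat list" where
  "level_labels s 0 = [s]"
| "level_labels s (Suc m) = concat (map (\<lambda>j. [2..<j+2]) (level_labels s m))"

definition expected_label :: "nat \<Rightarrow> nat \<Rightarrow> real" where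
  "expected_label s m =
     (\<Sum>x\<leftarrow>level_labels s m. real x) / real (length (level_labels s m))"

end

theory Submission
  imports Defs
begin

lemma cc: "concat (map f (concat xss)) = concat (map (\<lambda>xs. concat (map f xs)) xss)"
  by (induction xss) auto

lemma ll_Suc: "level_labels s (Suc m) = concat (map (\<lambda>j. level_labels j m) [2..<s+2])"
proof (induction m arbitrary: s)
  case 0
  then show ?case by (simp add: map_concat)
next
  case (Suc m)
  have "level_labels s (Suc (Suc m)) = concat (map (\<lambda>j. [2..<j+2]) (level_labels s (Suc m)))"
    by simp
  also have "\<dots> = concat (map (\<lambda>j. [2..<j+2]) (concat (map (\<lambda>j. level_labels j m) [2..<s+2])))"
    using Suc by simp
  also have "\<dots> = concat (map (\<lambda>i. concat (map (\<lambda>j. [2..<j+2]) (level_labels i m))) [2..<s+2])"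
    by (simp add: cc comp_def)
  also have "\<dots> = concat (map (\<lambda>i. level_labels i (Suc m)) [2..<s+2])"
    by simp
  finally show ?case .
qed

definition F :: "nat \<Rightarrow> nat \<Rightarrow> real" where
  "F m j = real j * fact (j + 2*m - 1) / (fact m * fact (j + m))"

lemma F0: "j \<ge> 1 \<Longrightarrow> F 0 j = 1"
proof -
  assume "j \<ge> 1"
  then obtain k where "j = Suc k" by (cases j) auto
  then show ?thesis by (simp add: F_def fact_Suc field_simps del: of_nat_Suc)
qed

lemma F_step: "F (Suc m) (Suc j) = F (Suc m) j + F m (j + 2)"
proof -
  have a: "F (Suc m) (Suc j) = real (j+1) * fact (j+2*m+2) / (fact (m+1) * fact (j+m+2))"
    by (simp add: F_def)
  have b: "F (Suc m) j = real j * fact (j+2*m+1) / (fact (m+1) * fact (j+m+1))"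
    by (simp add: F_def)
  have c: "F m (j+2) = real (j+2) * fact (j+2*m+1) / (fact m * fact (j+m+2))"
    by (simp add: F_def)
  have f1: "fact (j+2*m+2) = real (j+2*m+2) * fact (j+2*m+1)"
    using fact_Suc[of "j+2*m+1", where 'a=real] by (simp add: algebra_simps)
  have f2: "fact (j+m+2) = real (j+m+2) * (fact (j+m+1) :: real)"
    using fact_Suc[of "j+m+1", where 'a=real] by (simp add: algebra_simps)
  have f3: "fact (m+1) = real (m+1) * (fact m :: real)"
    by simp
  have p1: "(fact (j+2*m+1) :: real) > 0" and p2: "(fact (j+m+1)::real) > 0" and p3: "(fact m::real) > 0"
    by auto
  have key0: "\<And>A B C x y::real. A > 0 \<Longrightarrow> B > 0 \<Longrightarrow> C > 0 \<Longrightarrow> x \<ge> 0 \<Longrightarrow> y \<ge> 0 \<Longrightarrow>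
     (x+1) * ((x+2*y+2) * A) / ((y+1) * C * ((x+y+2) * B)) =
     x * A / ((y+1) * C * B) + (x+2) * A / (C * ((x+y+2) * B))"
  proof -
    fix A B C x y :: real
    assume h: "A > 0" "B > 0" "C > 0" "x \<ge> 0" "y \<ge> 0"
    have n1: "(y+1) * C * B \<noteq> 0" and n2: "C * ((x+y+2) * B) \<noteq> 0"
      and n3: "(y+1) * C * ((x+y+2) * B) \<noteq> 0" using h by auto
    have n4: "((y+1) * C * B) * (C * ((x+y+2) * B)) \<noteq> 0" using n1 n2 by simp
    show "(x+1) * ((x+2*y+2) * A) / ((y+1) * C * ((x+y+2) * B)) =
     x * A / ((y+1) * C * B) + (x+2) * A / (C * ((x+y+2) * B))"
      unfolding add_frac_eq[OF n1 n2] frac_eq_eq[OF n3 n4] by algebra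
  qed
  have key: "\<And>A B C::real. A > 0 \<Longrightarrow> B > 0 \<Longrightarrow> C > 0 \<Longrightarrow>
     real (j+1) * (real (j+2*m+2) * A) / (real (m+1) * C * (real (j+m+2) * B)) =
     real j * A / (real (m+1) * C * B) + real (j+2) * A / (C * (real (j+m+2) * B))"
  proof -
    fix A B C :: real assume h: "A > 0" "B > 0" "C > 0"
    have e: "real (j+1) = real j + 1" "real(j+2*m+2) = real j+2*real m+2" "real (m+1) = real m + 1"
      "real(j+m+2)= real j + real m + 2" "real(j+2) = real j + 2" by simp_all
    show "real (j+1) * (real (j+2*m+2) * A) / (real (m+1) * C * (real (j+m+2) * B)) =
     real j * A / (real (m+1) * C * B) + real (j+2) * A / (C * (real (j+m+2) * B))"
      unfolding e by (rule key0) (use h in auto)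
  qed
  show ?thesis unfolding a b c f1 f2 f3 using key[OF p1 p2 p3] by simp
qed

lemma F_sum: "(\<Sum>i\<leftarrow>[2..<s+2]. F m i) = F (Suc m) s"
proof (induction s)
  case 0
  then show ?case by (simp add: F_def)
next
  case (Suc s)
  have "[2..<Suc s + 2] = [2..<s+2] @ [s+2]" by simp
  then show ?case using Suc F_step[of m s] by simp
qed

lemma len_F: "real (length (level_labels s (Suc m))) = F (Suc m) s"
proof (induction m arbitrary: s)
  case 0
  have "real (length (level_labels s (Suc 0))) = (\<Sum>i\<leftarrow>[2..<s+2]. F 0 i)"
  proof -
    have "(\<Sum>i\<leftarrow>[2..<s+2]. F 0 i) = (\<Sum>i\<leftarrow>[2..<s+2]. 1)"
      by (rule arg_cong[where f=sum_list], rule map_cong) (auto intro: F0)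
    then show ?thesis by (simp add: sum_list_triv)
  qed
  then show ?case using F_sum by simp
next
  case (Suc m)
  have "real (length (level_labels s (Suc (Suc m)))) = (\<Sum>i\<leftarrow>[2..<s+2]. real (length (level_labels i (Suc m))))"
    unfolding ll_Suc[of s "Suc m"] length_concat by (simp add: sum_list_of_nat[symmetric] o_def)
  also have "\<dots> = (\<Sum>i\<leftarrow>[2..<s+2]. F (Suc m) i)" using Suc by simp
  finally show ?case using F_sum by simp
qed

lemma len_cc: "length (concat (map (\<lambda>j. [2..<j+2]) L)) = sum_list L"
  by (induction L) (simp_all del: upt_Suc)

lemma sum_labels: "(\<Sum>x\<leftarrow>level_labels s m. real x) = real (length (level_labels s (Suc m)))"
  by (simp only: level_labels.simps len_cc sum_list_of_nat)

lemma ratio_alg: "\<And>s P B C u v X::real. s>0 \<Longrightarrow> P>0 \<Longrightarrow> B>0 \<Longrightarrow> C>0 \<Longrightarrow> u>0 \<Longrightarrow> v>0 \<Longrightarrow>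
  (s*(X*P)/((u*C)*(v*B))) / (s*P/(C*B)) = X/(u*v)"
  by (simp add: field_simps)

lemma ineq_lem:
  fixes s m :: nat assumes "s \<ge> 2" "m \<ge> 1"
  shows "real ((s+2*m+1)*(s+2*m)) / real ((m+1)*(s+m+1)) < 4 + 2 * real s / real m"
proof -
  have nat: "m * ((s+2*m+1)*(s+2*m)) < (4*m + 2*s) * ((m+1)*(s+m+1))"
  proof -
    have "m * (s+2*m+1) < 2 * ((m+1)*(s+m+1))" by (simp add: algebra_simps)
    then have "m * (s+2*m+1) * (s+2*m) < 2 * ((m+1)*(s+m+1)) * (s+2*m)"
      using assms by (intro mult_strict_right_mono) auto
    moreover have "m * ((s+2*m+1)*(s+2*m)) = m * (s+2*m+1) * (s+2*m)" by (simp only: mult.assoc)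
    moreover have "(4*m + 2*s) * ((m+1)*(s+m+1)) = 2 * ((m+1)*(s+m+1)) * (s+2*m)" by (simp add: algebra_simps)
    ultimately show ?thesis by simp
  qed
  define X where "X = real ((s+2*m+1)*(s+2*m))"
  define Y where "Y = real ((m+1)*(s+m+1))"
  have r: "real m * X < (4*real m + 2*real s) * Y"
  proof -
    have "real (m * ((s+2*m+1)*(s+2*m))) < real ((4*m + 2*s) * ((m+1)*(s+m+1)))"
      using nat by (simp only: of_nat_less_iff)
    then show ?thesis unfolding X_def Y_def by (simp only: of_nat_mult of_nat_add of_nat_numeral)
  qed
  have mp: "real m > 0" using assms by simp
  have "(m+1)*(s+m+1) > 0" by simp
  then have yp: "Y > 0" unfolding Y_def by (simp only: of_nat_0_less_iff)
  have "X / Y < (4*real m + 2*real s) / real m"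
    using r mp yp by (simp add: divide_simps mult.commute)
  also have "\<dots> = 4 + 2 * real s / real m" using mp by (simp add: field_simps)
  finally show ?thesis unfolding X_def Y_def .
qed

theorem mainTheorem6:
  fixes s m :: nat
  assumes "s \<ge> 2" and "m \<ge> 1"
  shows "expected_label s m < 4 + 2 * real s / real m"
proof -
  obtain k where k: "m = Suc k" using assms(2) by (cases m) auto
  have E: "expected_label s m = F (Suc m) s / F m s"
    unfolding expected_label_def sum_labels k len_F by simp
  have r: "F (Suc m) s / F m s = real ((s+2*m+1)*(s+2*m)) / real ((m+1)*(s+m+1))"
  proof -
    have a: "F (Suc m) s = real s * fact (s+2*m+1) / (fact (m+1) * fact (s+m+1))"
      by (simp add: F_def)
    have b: "F m s = real s * fact (s+2*k+1) / (fact m * fact (s+m))"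
      using k by (simp add: F_def)
    have f1: "fact (s+2*m+1) = real ((s+2*m+1) * (s+2*m)) * (fact (s+2*k+1) :: real)"
    proof -
      have "s+2*m+1 = Suc (Suc (s+2*k+1))" using k by simp
      then have "(fact (s+2*m+1)::real) = fact (Suc (Suc (s+2*k+1)))" by simp
      also have "\<dots> = real (Suc (Suc (s+2*k+1))) * (real (Suc (s+2*k+1)) * fact (s+2*k+1))"
        by (simp only: fact_Suc)
      also have "\<dots> = real ((s+2*m+1) * (s+2*m)) * fact (s+2*k+1)" using k by (simp add: algebra_simps)
      finally show ?thesis .
    qed
    have f2: "fact (s+m+1) = real (s+m+1) * (fact (s+m) :: real)" by simp
    have f3: "fact (m+1) = real (m+1) * (fact m :: real)" by simp
    have p: "(fact (s+2*k+1) :: real) > 0" "(fact (s+m)::real) > 0" "(fact m::real) > 0"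
      "real s > 0" "real (m+1) > 0" "real (s+m+1) > 0" using assms by auto
    show ?thesis unfolding a b f1 f2 f3 of_nat_mult[of "m+1" "s+m+1"]
      by (rule ratio_alg) (use p in auto)
  qed
  have ineq: "real ((s+2*m+1)*(s+2*m)) / real ((m+1)*(s+m+1)) < 4 + 2 * real s / real m"
    by (rule ineq_lem[OF assms])
  show ?thesis using E r ineq by simp
qed

end
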